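(* Let $X$ be a real normed space, $f:X\to\mathbb R\cup\{+\infty\}$ proper, $\bar x\in(\partial f)^{-1}(0)$, and $p,q\in(1,\infty)$ with $p^{-1}+q^{-1}=1$. Suppose the image $\mathrm{Im}\,\partial f=\bigcup_{x\in X}\partial f(x)$ is dense in $X^*$. Then the following are equivalent: (i) there exists $\gamma>0$ with $f(x)\ge f(\bar x)+\gamma\|x-\bar x\|^p$ for all $x\in X$; (ii) there exists $\kappa>0$ such that $\partial f$ is strongly $\frac qp$-subregular at $\bar x$ with parameters $\alpha=+\infty$ and $\kappa$, i.e. $\|x-\bar x\|\le\kappa\,d(0,\partial f(x))^{q/p}$ for all $x\in X$.
   Context: $\partial f(x):=\{\xi\in X^*: x\text{ is a global minimizer of } f-\langle\xi,\cdot\rangle\}$; $d(0,\partial f(x))=\inf\{\|\xi\|:\xi\in\partial f(x)\}$, equal to $+\infty$ if $\partial f(x)=\emptyset$. *)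

theory Defs
  imports "HOL-Analysis.Analysis"
begin

(* Extended-real-valued functions f : X -> R \<union> {+inf}; the dual space X* is
  the space of bounded linear functionals 'a \<Rightarrow>_L real with the operator norm. *)

definition proper_fun :: "('a \<Rightarrow> ereal) \<Rightarrow> bool" where
  "proper_fun f \<longleftrightarrow> (\<forall>x. f x \<noteq> -\<infinity>) \<and> (\<exists>x. f x \<noteq> \<infinity>)"

definition subdiff :: "('a::real_normed_vector \<Rightarrow> ereal) \<Rightarrow> 'a \<Rightarrow> ('a \<Rightarrow>\<^sub>L real) set" where
  "subdiff f x = {\<xi>. \<forall>y. f x - ereal (blinfun_apply \<xi> x) \<le> f y - ereal (blinfun_apply \<xi> y)}"

(* d(0, subdiff f x) = inf of norms, +inf if the set is empty (Inf {} = \<infinity> in ereal). *)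
definition dist0_subdiff :: "('a::real_normed_vector \<Rightarrow> ereal) \<Rightarrow> 'a \<Rightarrow> ereal" where
  "dist0_subdiff f x = Inf ((\<lambda>\<xi>. ereal (norm \<xi>)) ` subdiff f x)"

definition epowr :: "ereal \<Rightarrow> real \<Rightarrow> ereal" where
  "epowr d r = (if d = \<infinity> then \<infinity> else ereal (real_of_ereal d powr r))"

end

theory Submission
  imports Defs
begin

definition goodG :: "'a::real_normed_vector \<Rightarrow> ('a \<times> real) set \<Rightarrow> bool" where
 "goodG v G \<longleftrightarrow> (\<forall>x a b. (x,a)\<in>G \<longrightarrow> (x,b)\<in>G \<longrightarrow> a = b)
   \<and> (\<forall>x a y b. (x,a)\<in>G \<longrightarrow> (y,b)\<in>G \<longrightarrow> (x+y,a+b)\<in>G)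
   \<and> (\<forall>x a c. (x,a)\<in>G \<longrightarrow> (c *\<^sub>R x, c*a)\<in>G)
   \<and> (v, norm v) \<in> G
   \<and> (\<forall>x a. (x,a)\<in>G \<longrightarrow> a \<le> norm x)"

lemma goodG_init: "goodG v {(t *\<^sub>R v, t * norm v) | t. True}"
proof -
  have fn1: "a = b" if "t *\<^sub>R v = s *\<^sub>R v" "a = t * norm v" "b = s * norm v" for t s a b
  proof (cases "v = 0")
    case True then show ?thesis using that by simp
  next
    case False
    then have "t = s" using that(1) by (metis scaleR_cancel_right)
    then show ?thesis using that by simp
  qed
  show ?thesis unfolding goodG_def
    apply (intro conjI)
        apply (blast intro: fn1)
       apply (clarsimp, metis scaleR_left_distrib distrib_right)
      apply (clarsimp, metis scaleR_scaleR mult.assoc)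
     apply (clarsimp, rule exI[of _ 1], simp)
    apply clarsimp
    by (metis abs_ge_self mult_right_mono norm_ge_zero norm_scaleR real_norm_def)
qed

lemma goodG_chain:
  assumes "C \<in> chains {G. goodG v G}" "C \<noteq> {}"
  shows "goodG v (\<Union>C)"
proof -
  have ch: "\<And>X Y. X \<in> C \<Longrightarrow> Y \<in> C \<Longrightarrow> X \<subseteq> Y \<or> Y \<subseteq> X"
    using assms(1) unfolding chains_def chain_subset_def by blast
  have gd: "\<And>X. X \<in> C \<Longrightarrow> goodG v X" using assms(1) unfolding chains_def by blast
  have two: "\<exists>Z\<in>C. p \<in> Z \<and> r \<in> Z" if "p \<in> \<Union>C" "r \<in> \<Union>C" for p r
    using that ch by blast
  show ?thesis unfolding goodG_def
  proof (intro conjI allI impI)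
    fix x a b assume "(x,a) \<in> \<Union>C" "(x,b) \<in> \<Union>C"
    then obtain Z where "Z\<in>C" "(x,a)\<in>Z" "(x,b)\<in>Z" using two by blast
    then show "a = b" using gd unfolding goodG_def by blast
  next
    fix x a y b assume "(x,a) \<in> \<Union>C" "(y,b) \<in> \<Union>C"
    then obtain Z where "Z\<in>C" "(x,a)\<in>Z" "(y,b)\<in>Z" using two by blast
    then show "(x+y,a+b) \<in> \<Union>C" using gd unfolding goodG_def by blast
  next
    fix x a c assume "(x,a) \<in> \<Union>C"
    then obtain Z where "Z\<in>C" "(x,a)\<in>Z" by blast
    then show "(c *\<^sub>R x, c*a) \<in> \<Union>C" using gd unfolding goodG_def by blast
  next
    obtain Z where "Z \<in> C" using assms(2) by blast
    then show "(v, norm v) \<in> \<Union>C" using gd unfolding goodG_def by blast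
  next
    fix x a assume "(x,a) \<in> \<Union>C"
    then obtain Z where "Z\<in>C" "(x,a)\<in>Z" by blast
    then show "a \<le> norm x" using gd unfolding goodG_def by blast
  qed
qed

lemma goodG_extend:
  assumes g: "goodG v M" and y: "\<forall>b. (y,b) \<notin> M"
  shows "\<exists>M'. goodG v M' \<and> M \<subseteq> M' \<and> M' \<noteq> M"
proof -
  have F: "\<And>x a b. (x,a)\<in>M \<Longrightarrow> (x,b)\<in>M \<Longrightarrow> a = b"
   and A: "\<And>x a z b. (x,a)\<in>M \<Longrightarrow> (z,b)\<in>M \<Longrightarrow> (x+z,a+b)\<in>M"
   and S: "\<And>x a c. (x,a)\<in>M \<Longrightarrow> (c *\<^sub>R x, c*a)\<in>M"
   and V: "(v, norm v) \<in> M"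
   and D: "\<And>x a. (x,a)\<in>M \<Longrightarrow> a \<le> norm x" using g unfolding goodG_def by blast+
  have Z: "(0,0) \<in> M" using S[OF V, of 0] by simp
  define L where "L = {b - norm (z - y) | z b. (z,b) \<in> M}"
  define c where "c = Sup L"
  have ab: "b - norm (z - y) \<le> norm (x + y) - a" if "(x,a)\<in>M" "(z,b)\<in>M" for x a z b
  proof -
    have "a + b \<le> norm (x + z)" using D[OF A[OF that]] .
    also have "\<dots> \<le> norm (x + y) + norm (z - y)"
      using norm_triangle_ineq[of "x+y" "z-y"] by (simp add: algebra_simps)
    finally show ?thesis by simp
  qed
  have Lne: "L \<noteq> {}" using Z unfolding L_def by blast
  have Lbd: "bdd_above L" unfolding L_def bdd_above_def using ab Z by blast
  have c1: "b - norm (z - y) \<le> c" if "(z,b)\<in>M" for z b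
    unfolding c_def by (rule cSup_upper[OF _ Lbd]) (use that L_def in blast)
  have c2: "c \<le> norm (x + y) - a" if "(x,a)\<in>M" for x a
    unfolding c_def by (rule cSup_least[OF Lne]) (use that ab L_def in blast)
  define M' where "M' = {(x + t *\<^sub>R y, a + t * c) | x a t. (x,a) \<in> M}"
  have memM': "(x + t *\<^sub>R y, a + t * c) \<in> M'" if "(x,a) \<in> M" for x a t
    unfolding M'_def using that by blast
  have sub: "M \<subseteq> M'"
  proof
    fix u assume u: "u \<in> M"
    obtain x a where xa: "u = (x,a)" by (cases u)
    show "u \<in> M'" using memM'[of x a 0] u xa by simp
  qed
  have yin: "(y, c) \<in> M'" using memM'[OF Z, of 1] by simp
  have neq: "M' \<noteq> M" using yin y by blast
  have uniq: "t = s \<and> x = z" if "(x,a)\<in>M" "(z,b)\<in>M" "x + t *\<^sub>R y = z + s *\<^sub>R y" for x a z b t s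
  proof (cases "t = s")
    case True then show ?thesis using that by simp
  next
    case False
    have "(z - x, b - a) \<in> M" using A[OF that(2) S[OF that(1), of "-1"]] by simp
    then have "((1/(t-s)) *\<^sub>R (z - x), (1/(t-s)) * (b - a)) \<in> M" by (rule S)
    moreover have "(1/(t-s)) *\<^sub>R (z - x) = y"
    proof -
      have "z - x = (t - s) *\<^sub>R y" using that(3) by (simp add: algebra_simps)
      then show ?thesis using False by simp
    qed
    ultimately have "(y, (1/(t-s)) * (b - a)) \<in> M" by simp
    then show ?thesis using y by blast
  qed
  have "goodG v M'" unfolding goodG_def
  proof (intro conjI allI impI)
    fix w a' b' assume "(w,a') \<in> M'" "(w,b') \<in> M'"
    then obtain x a t z b s where h: "(x,a)\<in>M" "(z,b)\<in>M" "w = x + t *\<^sub>R y" "a' = a + t*c"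
      "w = z + s *\<^sub>R y" "b' = b + s * c" unfolding M'_def by blast
    then have "t = s \<and> x = z" using uniq by metis
    then show "a' = b'" using h F by blast
  next
    fix w a' u b' assume "(w,a') \<in> M'" "(u,b') \<in> M'"
    then obtain x a t z b s where h: "(x,a)\<in>M" "(z,b)\<in>M" "w = x + t *\<^sub>R y" "a' = a + t*c"
      "u = z + s *\<^sub>R y" "b' = b + s * c" unfolding M'_def by blast
    have "w + u = (x + z) + (t + s) *\<^sub>R y" "a' + b' = (a + b) + (t+s)*c"
      using h by (auto simp: algebra_simps)
    then show "(w + u, a' + b') \<in> M'" unfolding M'_def using A[OF h(1,2)] by blast
  next
    fix w a' r assume "(w,a') \<in> M'"
    then obtain x a t where h: "(x,a)\<in>M" "w = x + t *\<^sub>R y" "a' = a + t*c"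
      unfolding M'_def by blast
    have "r *\<^sub>R w = r *\<^sub>R x + (r*t) *\<^sub>R y" "r * a' = r * a + (r*t)*c"
      using h by (auto simp: algebra_simps)
    then show "(r *\<^sub>R w, r * a') \<in> M'" unfolding M'_def using S[OF h(1)] by blast
  next
    show "(v, norm v) \<in> M'" using sub V by blast
  next
    fix w a' assume "(w,a') \<in> M'"
    then obtain x a t where h: "(x,a)\<in>M" "w = x + t *\<^sub>R y" "a' = a + t*c"
      unfolding M'_def by blast
    consider "t = 0" | "t > 0" | "t < 0" by linarith
    then show "a' \<le> norm w"
    proof cases
      case 1 then show ?thesis using h D by simp
    next
      case 2
      have "c \<le> norm ((1/t) *\<^sub>R x + y) - (1/t) * a" using c2[OF S[OF h(1)]] .
      then have "t * c \<le> t * norm ((1/t) *\<^sub>R x + y) - a" using 2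
        by (simp add: field_simps)
      also have "t * norm ((1/t) *\<^sub>R x + y) = norm (x + t *\<^sub>R y)"
      proof -
        have "x + t *\<^sub>R y = t *\<^sub>R ((1/t) *\<^sub>R x + y)" using 2 by (simp add: algebra_simps)
        then show ?thesis using 2 by simp
      qed
      finally show ?thesis using h by simp
    next
      case 3
      define s where "s = - t"
      have s: "s > 0" using 3 s_def by simp
      have "(1/s) * a - norm ((1/s) *\<^sub>R x - y) \<le> c" using c1[OF S[OF h(1)]] .
      then have "a - s * norm ((1/s) *\<^sub>R x - y) \<le> s * c" using s
        by (simp add: field_simps)
      also have "s * norm ((1/s) *\<^sub>R x - y) = norm (x + t *\<^sub>R y)"
      proof -
        have "x + t *\<^sub>R y = s *\<^sub>R ((1/s) *\<^sub>R x - y)" using s by (simp add: algebra_simps s_def)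
        then show ?thesis using s by simp
      qed
      finally show ?thesis using h s_def by simp
    qed
  qed
  then show ?thesis using sub neq by blast
qed

lemma hb_norming:
  fixes v :: "'a::real_normed_vector"
  shows "\<exists>\<xi>::'a \<Rightarrow>\<^sub>L real. blinfun_apply \<xi> v = norm v \<and> norm \<xi> \<le> 1"
proof -
  have "\<forall>C\<in>chains {G. goodG v G}. \<exists>U\<in>{G. goodG v G}. \<forall>X\<in>C. X \<subseteq> U"
  proof
    fix C assume C: "C \<in> chains {G. goodG v G}"
    show "\<exists>U\<in>{G. goodG v G}. \<forall>X\<in>C. X \<subseteq> U"
    proof (cases "C = {}")
      case True then show ?thesis using goodG_init by blast
    next
      case False then show ?thesis using goodG_chain[OF C] by blast
    qed
  qed
  from Zorn_Lemma2[OF this] obtain M where M: "goodG v M"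
    and max: "\<forall>X\<in>{G. goodG v G}. M \<subseteq> X \<longrightarrow> X = M" by blast
  have F: "\<And>x a b. (x,a)\<in>M \<Longrightarrow> (x,b)\<in>M \<Longrightarrow> a = b"
   and A: "\<And>x a z b. (x,a)\<in>M \<Longrightarrow> (z,b)\<in>M \<Longrightarrow> (x+z,a+b)\<in>M"
   and S: "\<And>x a c. (x,a)\<in>M \<Longrightarrow> (c *\<^sub>R x, c*a)\<in>M"
   and V: "(v, norm v) \<in> M"
   and D: "\<And>x a. (x,a)\<in>M \<Longrightarrow> a \<le> norm x" using M unfolding goodG_def by blast+
  have tot: "\<exists>a. (x,a) \<in> M" for x
    using goodG_extend[OF M, of x] max by blast
  define g where "g x = (THE a. (x,a) \<in> M)" for x
  have gM: "(x, g x) \<in> M" for x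
    unfolding g_def using tot[of x] F by (metis theI)
  have geq: "(x,a) \<in> M \<Longrightarrow> g x = a" for x a using gM F by blast
  have lin: "linear g"
  proof (rule linearI)
    fix x z show "g (x + z) = g x + g z" by (rule geq[OF A[OF gM gM]])
  next
    fix r x show "g (r *\<^sub>R x) = r *\<^sub>R g x" using geq[OF S[OF gM[of x], of r]] by simp
  qed
  have bnd: "norm (g x) \<le> 1 * norm x" for x
  proof -
    have "g x \<le> norm x" using D gM by blast
    moreover have "- g x \<le> norm x" using D[OF S[OF gM, of "-1"]] by simp
    ultimately show ?thesis by simp
  qed
  have bl: "bounded_linear g"
  proof (rule bounded_linear_intro[where K=1])
    show "g (x + z) = g x + g z" for x z using lin by (rule linear_add)
    show "g (r *\<^sub>R x) = r *\<^sub>R g x" for r x using lin by (rule linear_scale)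
    show "norm (g x) \<le> norm x * 1" for x using bnd[of x] by simp
  qed
  show ?thesis
  proof (intro exI conjI)
    show "blinfun_apply (Blinfun g) v = norm v" using bl geq[OF V] by (simp add: bounded_linear_Blinfun_apply)
    show "norm (Blinfun g) \<le> 1"
    proof (rule norm_blinfun_bound)
      show "norm (blinfun_apply (Blinfun g) x) \<le> 1 * norm x" for x
        using bnd[of x] bounded_linear_Blinfun_apply[OF bl] by simp
    qed simp
  qed
qed



lemma powr_ids:
  fixes p q :: real
  assumes "p > 1" "q > 1" "1/p + 1/q = 1"
  shows "(p-1)*(q/p) = 1" "1 + q/p = q" "(p-1)*(q-1) = 1"
proof -
  have e: "p + q = p*q" using assms by (simp add: field_simps)
  show "(p-1)*(q/p) = 1" using e assms by (simp add: field_simps)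
  show "1 + q/p = q" using e assms by (simp add: field_simps)
  show "(p-1)*(q-1) = 1" using e by (simp add: algebra_simps)
qed

lemma epowr_nonneg: "0 \<le> epowr d r"
  unfolding epowr_def by auto

lemma dist0_ge0: "0 \<le> dist0_subdiff f x"
  unfolding dist0_subdiff_def by (rule Inf_greatest) auto

lemma dist0_le: "\<xi> \<in> subdiff f x \<Longrightarrow> dist0_subdiff f x \<le> ereal (norm \<xi>)"
  unfolding dist0_subdiff_def by (rule Inf_lower) auto

lemma subdiff_ineq:
  assumes "\<xi> \<in> subdiff f x"
  shows "f x - ereal (blinfun_apply \<xi> x) \<le> f y - ereal (blinfun_apply \<xi> y)"
  using assms unfolding subdiff_def by blast

lemma bl_le: "blinfun_apply \<xi> v \<le> norm \<xi> * norm (v::'a::real_normed_vector)"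
  using norm_blinfun[of \<xi> v] by simp

lemma norm_powr_q:
  fixes s q p :: real
  assumes "s \<ge> 0" "1 + q/p = q" "q > 0"
  shows "s * s powr (q/p) = s powr q"
proof (cases "s = 0")
  case True then show ?thesis using assms by simp
next
  case False
  have "s powr (1 + q/p) = s powr q" using assms(2) by simp
  then have "s powr q = s powr (1 + q/p)" by simp
  also have "\<dots> = s * s powr (q/p)" using False assms(1) by (simp add: powr_add)
  finally show ?thesis by simp
qed

theorem corollary4p3:
  fixes f :: "'a::real_normed_vector \<Rightarrow> ereal" and xbar :: 'a and p q :: real
  assumes "proper_fun f"
    and "0 \<in> subdiff f xbar"
    and "p > 1" and "q > 1" and "1 / p + 1 / q = 1"
    and "closure (\<Union>x. subdiff f x) = UNIV"
  shows "(\<exists>\<gamma>>0. \<forall>x. f x \<ge> f xbar + ereal (\<gamma> * norm (x - xbar) powr p))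
     \<longleftrightarrow> (\<exists>\<kappa>>0. \<forall>x. ereal (norm (x - xbar)) \<le> ereal \<kappa> * epowr (dist0_subdiff f x) (q / p))"
proof -
  have p1: "p > 1" and q1: "q > 1" by fact+
  note ids = powr_ids[OF assms(3-5)]
  have min: "f xbar \<le> f y" for y
    using subdiff_ineq[OF assms(2), of y] by simp
  have ninf: "f y \<noteq> -\<infinity>" for y using assms(1) unfolding proper_fun_def by blast
  obtain y0 where "f y0 \<noteq> \<infinity>" using assms(1) unfolding proper_fun_def by blast
  then have "f xbar \<noteq> \<infinity>" using min[of y0] by auto
  then obtain m where m: "f xbar = ereal m" using ninf[of xbar] by (cases "f xbar") auto
  show ?thesis
  proof
    assume "\<exists>\<gamma>>0. \<forall>x. f x \<ge> f xbar + ereal (\<gamma> * norm (x - xbar) powr p)"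
    then obtain \<gamma> where g0: "\<gamma> > 0" and G: "\<And>x. f x \<ge> f xbar + ereal (\<gamma> * norm (x - xbar) powr p)"
      by blast
    define \<kappa> where "\<kappa> = (1/\<gamma>) powr (q/p)"
    have k0: "\<kappa> > 0" unfolding \<kappa>_def using g0 by simp
    have "ereal (norm (x - xbar)) \<le> ereal \<kappa> * epowr (dist0_subdiff f x) (q / p)" for x
    proof -
      define r where "r = norm (x - xbar)"
      have r0: "r \<ge> 0" unfolding r_def by simp
      show ?thesis
      proof (cases "subdiff f x = {}")
        case True
        then have "dist0_subdiff f x = \<infinity>" unfolding dist0_subdiff_def by (simp add: top_ereal_def)
        then show ?thesis using k0 by (simp add: epowr_def)
      next
        case False
        then obtain \<xi>0 where xi0: "\<xi>0 \<in> subdiff f x" by blast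
        show ?thesis
        proof (cases "r = 0")
          case True
          have "0 \<le> ereal \<kappa> * epowr (dist0_subdiff f x) (q / p)"
            using k0 epowr_nonneg[of "dist0_subdiff f x" "q/p"] by (simp add: ereal_zero_le_0_iff)
          then show ?thesis using True unfolding r_def by (simp add: zero_ereal_def)
        next
          case False
          then have rp: "r > 0" using r0 by simp
          have key: "\<gamma> * r powr (p-1) \<le> norm \<xi>" if xi: "\<xi> \<in> subdiff f x" for \<xi>
          proof -
            have h: "f x - ereal (blinfun_apply \<xi> x) \<le> ereal m - ereal (blinfun_apply \<xi> xbar)"
              using subdiff_ineq[OF xi, of xbar] m by simp
            have "f x \<noteq> \<infinity>"
            proof
              assume "f x = \<infinity>" then show False using h by simp
            qed
            then obtain a where a: "f x = ereal a" using ninf[of x] by (cases "f x") auto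
            have h2: "a - blinfun_apply \<xi> x \<le> m - blinfun_apply \<xi> xbar" using h a by simp
            have h3: "m + \<gamma> * r powr p \<le> a" using G[of x] a m unfolding r_def by simp
            have "blinfun_apply \<xi> x - blinfun_apply \<xi> xbar = blinfun_apply \<xi> (x - xbar)"
              by (simp add: blinfun.diff_right)
            also have "\<dots> \<le> norm \<xi> * r" unfolding r_def by (rule bl_le)
            finally have "\<gamma> * r powr p \<le> norm \<xi> * r" using h2 h3 by linarith
            moreover have "r powr p = r powr (p-1) * r"
              using rp powr_add[of r "p-1" 1] by simp
            ultimately have "(\<gamma> * r powr (p-1)) * r \<le> norm \<xi> * r" by (simp add: mult.assoc)
            then show ?thesis using rp by simp
          qed
          define D where "D = dist0_subdiff f x"
          have "ereal (\<gamma> * r powr (p-1)) \<le> D"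
            unfolding D_def dist0_subdiff_def by (rule Inf_greatest) (use key in auto)
          moreover have "D \<le> ereal (norm \<xi>0)" unfolding D_def by (rule dist0_le[OF xi0])
          ultimately obtain d where d: "D = ereal d" and dle: "\<gamma> * r powr (p-1) \<le> d"
            by (cases D) auto
          have "r = (r powr (p-1)) powr (q/p)"
            using rp ids(1) by (simp add: powr_powr)
          also have "\<dots> \<le> (d / \<gamma>) powr (q/p)"
            by (rule powr_mono2) (use dle g0 p1 q1 in \<open>auto simp: field_simps\<close>)
          also have "\<dots> = \<kappa> * d powr (q/p)"
            unfolding \<kappa>_def using g0 dle rp
            by (subst powr_mult[symmetric]) (auto simp: field_simps intro!: order_trans[OF _ dle])
          finally show ?thesis using d unfolding D_def r_def epowr_def by simp
        qed
      qed
    qed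
    then show "\<exists>\<kappa>>0. \<forall>x. ereal (norm (x - xbar)) \<le> ereal \<kappa> * epowr (dist0_subdiff f x) (q / p)"
      using k0 by blast
  next
    assume "\<exists>\<kappa>>0. \<forall>x. ereal (norm (x - xbar)) \<le> ereal \<kappa> * epowr (dist0_subdiff f x) (q / p)"
    then obtain \<kappa> where k0: "\<kappa> > 0"
      and K: "\<And>x. ereal (norm (x - xbar)) \<le> ereal \<kappa> * epowr (dist0_subdiff f x) (q / p)" by blast
    have stepA: "norm (y - xbar) \<le> \<kappa> * norm \<xi> powr (q/p)" if xi: "\<xi> \<in> subdiff f y" for y \<xi>
    proof -
      have "dist0_subdiff f y \<le> ereal (norm \<xi>)" by (rule dist0_le[OF xi])
      moreover have "0 \<le> dist0_subdiff f y" by (rule dist0_ge0)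
      ultimately obtain d where d: "dist0_subdiff f y = ereal d" "0 \<le> d" "d \<le> norm \<xi>"
        by (cases "dist0_subdiff f y") auto
      have "norm (y - xbar) \<le> \<kappa> * d powr (q/p)" using K[of y] d by (simp add: epowr_def)
      also have "\<dots> \<le> \<kappa> * norm \<xi> powr (q/p)"
        by (intro mult_left_mono powr_mono2) (use d k0 p1 q1 in auto)
      finally show ?thesis .
    qed
    have stepB: "blinfun_apply \<xi> (x - xbar) - \<kappa> * norm \<xi> powr q \<le> a - m"
      if a: "f x = ereal a" and xi: "\<xi> \<in> (\<Union>y. subdiff f y)" for x a \<xi>
    proof -
      obtain y where xi: "\<xi> \<in> subdiff f y" using xi by blast
      have h: "f y - ereal (blinfun_apply \<xi> y) \<le> ereal a - ereal (blinfun_apply \<xi> x)"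
        using subdiff_ineq[OF xi, of x] a by simp
      have "f y \<noteq> \<infinity>"
      proof
        assume "f y = \<infinity>" then show False using h by simp
      qed
      then obtain b where b: "f y = ereal b" using ninf[of y] by (cases "f y") auto
      have h2: "b - blinfun_apply \<xi> y \<le> a - blinfun_apply \<xi> x" using h b by simp
      have mb: "m \<le> b" using min[of y] m b by simp
      have "blinfun_apply \<xi> (y - xbar) \<le> norm \<xi> * norm (y - xbar)" by (rule bl_le)
      also have "\<dots> \<le> norm \<xi> * (\<kappa> * norm \<xi> powr (q/p))"
        by (rule mult_left_mono[OF stepA[OF xi]]) simp
      also have "\<dots> = \<kappa> * (norm \<xi> * norm \<xi> powr (q/p))" by simp
      also have "\<dots> = \<kappa> * norm \<xi> powr q"
        using norm_powr_q[of "norm \<xi>" q p] ids(2) q1 by simp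
      finally have "blinfun_apply \<xi> (y - xbar) \<le> \<kappa> * norm \<xi> powr q" .
      moreover have "blinfun_apply \<xi> (x - xbar) = blinfun_apply \<xi> x - blinfun_apply \<xi> xbar"
        "blinfun_apply \<xi> (y - xbar) = blinfun_apply \<xi> y - blinfun_apply \<xi> xbar"
        by (simp_all add: blinfun.diff_right)
      ultimately show ?thesis using h2 mb by linarith
    qed
    have stepC: "blinfun_apply \<xi> (x - xbar) - \<kappa> * norm \<xi> powr q \<le> a - m"
      if a: "f x = ereal a" for x a \<xi>
    proof -
      define C where "C = {\<xi>::'a \<Rightarrow>\<^sub>L real. blinfun_apply \<xi> (x - xbar) - \<kappa> * norm \<xi> powr q \<le> a - m}"
      have "closed C" unfolding C_def
        by (intro closed_Collect_le continuous_intros continuous_on_powr') (use q1 in auto)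
      moreover have "(\<Union>y. subdiff f y) \<subseteq> C" unfolding C_def using stepB[OF a] by blast
      ultimately have "closure (\<Union>y. subdiff f y) \<subseteq> C" by (rule closure_minimal[rotated])
      then show ?thesis using assms(6) unfolding C_def by blast
    qed
    define \<gamma> where "\<gamma> = (1/(2*\<kappa>)) powr (p-1) / 2"
    have g0: "\<gamma> > 0" unfolding \<gamma>_def using k0 by simp
    have "f x \<ge> f xbar + ereal (\<gamma> * norm (x - xbar) powr p)" for x
    proof (cases "f x")
      case PInf then show ?thesis by simp
    next
      case MInf then show ?thesis using ninf by blast
    next
      case (real a)
      show ?thesis
      proof (cases "x = xbar")
        case True then show ?thesis using p1 by simp
      next
        case False
        define v where "v = x - xbar"
        define r where "r = norm v"
        have rp: "r > 0" unfolding r_def v_def using False by simp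
        obtain \<xi>0 :: "'a \<Rightarrow>\<^sub>L real" where xi0: "blinfun_apply \<xi>0 v = norm v" "norm \<xi>0 \<le> 1"
          using hb_norming by blast
        define c where "c = r / (2*\<kappa>)"
        have c0: "c > 0" unfolding c_def using rp k0 by simp
        define t where "t = c powr (p-1)"
        have t0: "t > 0" unfolding t_def using c0 by simp
        have tq1: "t powr (q-1) = c" unfolding t_def using c0 ids(3) by (simp add: powr_powr)
        have tq: "t powr q = t * c"
        proof -
          have "t powr q = t powr (1 + (q-1))" by simp
          also have "\<dots> = t * c" using t0 tq1 powr_add[of t 1 "q-1"] by simp
          finally show ?thesis .
        qed
        have "blinfun_apply (t *\<^sub>R \<xi>0) v - \<kappa> * norm (t *\<^sub>R \<xi>0) powr q \<le> a - m"
          using stepC[OF real] unfolding v_def by blast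
        moreover have "blinfun_apply (t *\<^sub>R \<xi>0) v = t * r" using xi0 unfolding r_def by (simp add: scaleR_blinfun.rep_eq)
        moreover have "norm (t *\<^sub>R \<xi>0) powr q \<le> t powr q"
          by (rule powr_mono2) (use t0 q1 xi0 in \<open>auto intro!: mult_left_le\<close>)
        ultimately have "t * r - \<kappa> * (t * c) \<le> a - m" using tq k0
          by (smt (verit) mult_left_mono)
        moreover have "\<kappa> * (t * c) = t * r / 2" unfolding c_def using k0 by (simp add: field_simps)
        ultimately have le: "t * r / 2 \<le> a - m" by linarith
        have "\<gamma> * r powr p = t * r / 2"
        proof -
          have "r powr p = r powr (p-1) * r" using rp powr_add[of r "p-1" 1] by simp
          moreover have "t = r powr (p-1) * (1/(2*\<kappa>)) powr (p-1)"
            unfolding t_def c_def using rp k0 by (simp add: powr_mult[symmetric])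
          ultimately show ?thesis unfolding \<gamma>_def by (simp add: field_simps)
        qed
        then show ?thesis using le real m unfolding r_def v_def by simp
      qed
    qed
    then show "\<exists>\<gamma>>0. \<forall>x. f x \<ge> f xbar + ereal (\<gamma> * norm (x - xbar) powr p)" using g0 by blast
  qed
qed

end
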